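(* Let $n \ge 0$ and $p \ge 1$ be integers, let $T_2 = \begin{pmatrix} 1 & 0 \\ 1 & 1 \end{pmatrix}$ over $\mathbb{F}_2$, let $T_p$ be a $p \times p$ binary kernel matrix, and let $T_N = T_2^{\otimes n} \otimes T_p$, where $N = 2^n p$. Then the minimum-distance spectra satisfy $$S_{T_N} = \operatorname{sort}\big(S_{T_2^{\otimes n}} \otimes S_{T_p}\big) = \operatorname{sort}\big([2 \;\; 1]^{\otimes n} \otimes S_{T_p}\big),$$ that is, for every $k \in \{1,\dots,N\}$, $S_{T_N}(k)$ equals the $k$-th entry of the vector obtained by sorting the entries of the length-$N$ vector $[2\;\;1]^{\otimes n} \otimes S_{T_p}$ in non-increasing order (and likewise for $S_{T_2^{\otimes n}} \otimes S_{T_p}$).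
   Context: All matrices are over $\mathbb{F}_2$ and $\otimes$ denotes the Kronecker product (of matrices, and of row vectors regarded as $1\times m$ matrices); $A^{\otimes n}$ is the $n$-fold Kronecker power, with $A^{\otimes 0} = (1)$. A binary kernel is a $p\times p$ binary matrix that is polarizing, i.e. it is invertible over $\mathbb{F}_2$ and no column permutation of it is upper triangular. For a binary $m \times m$ matrix $T$ with rows indexed by $[m] = \{0,1,\dots,m-1\}$ and a subset $\mathcal{R} \subseteq [m]$, $T^{(\mathcal{R})}$ denotes the submatrix formed by the rows indexed by $\mathcal{R}$, and $d(A)$ denotes the minimum Hamming distance (minimum weight of a nonzero codeword) of the binary linear code spanned by the rows of $A$. The minimum-distance spectrum of $T$ is the vector $S_T = (S_T(1), \dots, S_T(m))$ with $S_T(k) = \max_{\mathcal{R}\subseteq[m],\, |\mathcal{R}| = k} d\big(T^{(\mathcal{R})}\big)$. For a real vector $v$, $\operatorname{sort}(v)$ is the vector with the same entries (with multiplicity) arranged in non-increasing order. *)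

theory Defs
  imports Main "HOL-Combinatorics.Permutations"
begin

text \<open>Binary matrices over F_2 are represented as functions nat => nat => bool
(True = 1, False = 0); an m x m matrix only uses the entries with indices < m.
Addition over F_2 is parity.\<close>

type_synonym bmat = "nat \<Rightarrow> nat \<Rightarrow> bool"

definition bmult :: "nat \<Rightarrow> bmat \<Rightarrow> bmat \<Rightarrow> bmat" where
  "bmult m A B = (\<lambda>i j. odd (card {l. l < m \<and> A i l \<and> B l j}))"

definition binvertible :: "nat \<Rightarrow> bmat \<Rightarrow> bool" where
  "binvertible m A \<longleftrightarrow> (\<exists>B. \<forall>i<m. \<forall>j<m.
      bmult m A B i j = (i = j) \<and> bmult m B A i j = (i = j))"

definition bupper_triangular :: "nat \<Rightarrow> bmat \<Rightarrow> bool" where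
  "bupper_triangular m A \<longleftrightarrow> (\<forall>i<m. \<forall>j<m. j < i \<longrightarrow> \<not> A i j)"

definition binary_kernel :: "nat \<Rightarrow> bmat \<Rightarrow> bool" where
  "binary_kernel p T \<longleftrightarrow> binvertible p T \<and>
     (\<forall>\<sigma>. \<sigma> permutes {..<p} \<longrightarrow> \<not> bupper_triangular p (\<lambda>i j. T i (\<sigma> j)))"

definition bkron :: "bmat \<Rightarrow> nat \<Rightarrow> nat \<Rightarrow> bmat \<Rightarrow> bmat" where
  "bkron A r c B = (\<lambda>i j. A (i div r) (j div c) \<and> B (i mod r) (j mod c))"

definition T2 :: bmat where
  "T2 = (\<lambda>i j. i = 1 \<or> j = 0)"

fun bkpow2 :: "bmat \<Rightarrow> nat \<Rightarrow> bmat" where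
  "bkpow2 A 0 = (\<lambda>i j. True)"
| "bkpow2 A (Suc n) = bkron A (2^n) (2^n) (bkpow2 A n)"

definition code_of_rows :: "nat \<Rightarrow> bmat \<Rightarrow> nat set \<Rightarrow> (nat \<Rightarrow> bool) set" where
  "code_of_rows m T R = {(\<lambda>j. j < m \<and> odd (card {i\<in>S. T i j})) | S. S \<subseteq> R}"

definition weight :: "nat \<Rightarrow> (nat \<Rightarrow> bool) \<Rightarrow> nat" where
  "weight m c = card {j. j < m \<and> c j}"

definition min_dist :: "nat \<Rightarrow> bmat \<Rightarrow> nat set \<Rightarrow> nat" where
  "min_dist m T R = Min {weight m c | c. c \<in> code_of_rows m T R \<and> (\<exists>j<m. c j)}"

definition md_spec :: "nat \<Rightarrow> bmat \<Rightarrow> nat \<Rightarrow> nat" where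
  "md_spec m T k = Max {min_dist m T R | R. R \<subseteq> {..<m} \<and> card R = k}"

definition md_spectrum :: "nat \<Rightarrow> bmat \<Rightarrow> nat list" where
  "md_spectrum m T = map (md_spec m T) [1..<m+1]"

definition lkron :: "nat list \<Rightarrow> nat list \<Rightarrow> nat list" where
  "lkron u v = concat (map (\<lambda>x. map (\<lambda>y. x * y) v) u)"

fun lkpow :: "nat list \<Rightarrow> nat \<Rightarrow> nat list" where
  "lkpow u 0 = [1]"
| "lkpow u (Suc n) = lkron u (lkpow u n)"

definition sort_desc :: "nat list \<Rightarrow> nat list" where
  "sort_desc xs = rev (sort xs)"

end

theory Submission
  imports Defs
begin



definition cw :: "nat \<Rightarrow> bmat \<Rightarrow> nat set \<Rightarrow> nat \<Rightarrow> bool" where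
  "cw m B S = (\<lambda>j. j < m \<and> odd (card {i\<in>S. B i j}))"

lemma code_of_rows_cw: "code_of_rows m B R = {cw m B S | S. S \<subseteq> R}"
  unfolding code_of_rows_def cw_def by simp

definition goodR :: "nat \<Rightarrow> bmat \<Rightarrow> nat \<Rightarrow> nat \<Rightarrow> nat set \<Rightarrow> bool" where
  "goodR m B e d R \<longleftrightarrow> (\<forall>S\<subseteq>R. (\<exists>j<m. cw m B S j) \<longrightarrow> d \<le> e * weight m (cw m B S))"

lemma weight_split:
  "weight (2*M) c = weight M c + card {j. j < M \<and> c (j + M)}"
proof -
  have e: "{j. j < 2*M \<and> c j} = {j. j < M \<and> c j} \<union> (\<lambda>j. j + M) ` {j. j < M \<and> c (j + M)}"
  proof (rule set_eqI)
    fix x show "x \<in> {j. j < 2*M \<and> c j} \<longleftrightarrow> x \<in> {j. j < M \<and> c j} \<union> (\<lambda>j. j + M) ` {j. j < M \<and> c (j + M)}"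
    proof (cases "x < M")
      case True then show ?thesis by auto
    next
      case False
      have "x \<in> (\<lambda>j. j + M) ` {j. j < M \<and> c (j + M)} \<longleftrightarrow> x - M < M \<and> c x"
      proof
        assume "x \<in> (\<lambda>j. j + M) ` {j. j < M \<and> c (j + M)}"
        then obtain y where "x = y + M" "y < M" "c (y + M)" by auto
        then show "x - M < M \<and> c x" by simp
      next
        assume "x - M < M \<and> c x"
        then have "x = (x - M) + M" "x - M \<in> {j. j < M \<and> c (j + M)}" using False by auto
        then show "x \<in> (\<lambda>j. j + M) ` {j. j < M \<and> c (j + M)}" by (rule image_eqI)
      qed
      then show ?thesis using False by auto
    qed
  qed
  have c: "card ((\<lambda>j. j + M) ` {j. j < M \<and> c (j + M)}) = card {j. j < M \<and> c (j + M)}"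
    by (rule card_image) (auto simp: inj_on_def)
  have "card ({j. j < M \<and> c j} \<union> (\<lambda>j. j + M) ` {j. j < M \<and> c (j + M)})
     = card {j. j < M \<and> c j} + card ((\<lambda>j. j + M) ` {j. j < M \<and> c (j + M)})"
    by (rule card_Un_disjoint) auto
  then show ?thesis unfolding weight_def e c .
qed

context
  fixes M :: nat and B :: bmat and S :: "nat set"
  assumes M: "M > 0" and S: "S \<subseteq> {..<2*M}"
begin

lemma cw_low:
  assumes j: "j < M"
  shows "cw (2*M) (bkron T2 M M B) S j =
    (cw M B {i\<in>S. i < M} j \<noteq> cw M B {i. i + M \<in> S} j)"
proof -
  have fin: "finite S" using S finite_subset by blast
  have eq: "{i\<in>S. bkron T2 M M B i j} = {i\<in>{i\<in>S. i < M}. B i j} \<union> (\<lambda>i. i + M) ` {i\<in>{i. i + M \<in> S}. B i j}"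
  proof (rule set_eqI)
    fix x show "x \<in> {i\<in>S. bkron T2 M M B i j} \<longleftrightarrow> x \<in> {i\<in>{i\<in>S. i < M}. B i j} \<union> (\<lambda>i. i + M) ` {i\<in>{i. i + M \<in> S}. B i j}"
    proof (cases "x < M")
      case True then show ?thesis using j by (auto simp: bkron_def T2_def)
    next
      case False
      have jd: "j div M = 0" "j mod M = j" using j by auto
      have md: "x mod M = x - M" if "x \<in> S"
      proof -
        have "x < 2*M" using S that by auto
        then have "x - M < M" using False by linarith
        then show ?thesis using False by (metis le_mod_geq mod_less not_less)
      qed
      have "x \<in> {i\<in>S. bkron T2 M M B i j} \<longleftrightarrow> x \<in> S \<and> B (x - M) j"
        using md by (auto simp: bkron_def T2_def jd)
      moreover have "x \<in> (\<lambda>i. i + M) ` {i\<in>{i. i + M \<in> S}. B i j} \<longleftrightarrow> x \<in> S \<and> B (x - M) j"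
        using False by (auto simp: image_iff intro!: exI[of _ "x - M"])
      ultimately show ?thesis using False by auto
    qed
  qed
  have "card {i\<in>S. bkron T2 M M B i j} = card {i\<in>{i\<in>S. i < M}. B i j} + card {i\<in>{i. i + M \<in> S}. B i j}"
  proof -
    have f1: "finite {i. i + M \<in> S}"
      using finite_vimageI[OF fin, of "\<lambda>i. i + M"] by (simp add: inj_on_def vimage_def)
    have c2: "card ((\<lambda>i. i + M) ` {i\<in>{i. i + M \<in> S}. B i j}) = card {i\<in>{i. i + M \<in> S}. B i j}"
      by (rule card_image) (simp add: inj_on_def)
    have "card ({i\<in>{i\<in>S. i < M}. B i j} \<union> (\<lambda>i. i + M) ` {i\<in>{i. i + M \<in> S}. B i j})
       = card {i\<in>{i\<in>S. i < M}. B i j} + card ((\<lambda>i. i + M) ` {i\<in>{i. i + M \<in> S}. B i j})"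
      by (rule card_Un_disjoint) (use fin f1 in auto)
    then show ?thesis unfolding eq c2 .
  qed
  then show ?thesis using j by (simp add: cw_def)
qed

lemma cw_high:
  assumes j: "j < M"
  shows "cw (2*M) (bkron T2 M M B) S (j + M) = cw M B {i. i + M \<in> S} j"
proof -
  have jd: "(j + M) div M = 1" "(j + M) mod M = j" using j M by (auto simp: div_add_self2 mod_add_self2)
  have eq: "{i\<in>S. bkron T2 M M B i (j + M)} = (\<lambda>i. i + M) ` {i\<in>{i. i + M \<in> S}. B i j}"
  proof (rule set_eqI)
    fix x show "x \<in> {i\<in>S. bkron T2 M M B i (j + M)} \<longleftrightarrow> x \<in> (\<lambda>i. i + M) ` {i\<in>{i. i + M \<in> S}. B i j}"
    proof (cases "x < M")
      case True
      have "\<not> bkron T2 M M B x (j + M)" using True by (simp add: bkron_def T2_def jd)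
      moreover have "x \<notin> (\<lambda>i. i + M) ` {i\<in>{i. i + M \<in> S}. B i j}" using True by auto
      ultimately show ?thesis by auto
    next
      case False
      have md: "x mod M = x - M" "x div M = 1" if "x \<in> S"
      proof -
        have "x < 2*M" using S that by auto
        then have "x - M < M" using False by linarith
        obtain y where y: "x = y + M" "y < M" using False \<open>x - M < M\<close> by (intro that[of "x - M"]) auto
        then show "x mod M = x - M" "x div M = 1" using M by (auto simp: div_add_self2 mod_add_self2)
      qed
      have "x \<in> {i\<in>S. bkron T2 M M B i (j + M)} \<longleftrightarrow> x \<in> S \<and> B (x - M) j"
        using md j by (auto simp: bkron_def T2_def jd)
      moreover have "x \<in> (\<lambda>i. i + M) ` {i\<in>{i. i + M \<in> S}. B i j} \<longleftrightarrow> x \<in> S \<and> B (x - M) j"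
      proof
        assume "x \<in> (\<lambda>i. i + M) ` {i\<in>{i. i + M \<in> S}. B i j}"
        then obtain y where "x = y + M" "y + M \<in> S" "B y j" by auto
        then show "x \<in> S \<and> B (x - M) j" by simp
      next
        assume a: "x \<in> S \<and> B (x - M) j"
        then have "x = (x - M) + M" "x - M \<in> {i\<in>{i. i + M \<in> S}. B i j}" using False by auto
        then show "x \<in> (\<lambda>i. i + M) ` {i\<in>{i. i + M \<in> S}. B i j}" by (rule image_eqI)
      qed
      ultimately show ?thesis by auto
    qed
  qed
  have "card {i\<in>S. bkron T2 M M B i (j + M)} = card {i\<in>{i. i + M \<in> S}. B i j}"
    unfolding eq by (rule card_image) (simp add: inj_on_def)
  then show ?thesis using j by (simp add: cw_def)
qed

lemma cw_out: "j \<ge> 2*M \<Longrightarrow> \<not> cw (2*M) (bkron T2 M M B) S j"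
  by (simp add: cw_def)

end




lemma cw_empty: "cw m B {} = (\<lambda>j. False)"
  by (simp add: cw_def)

lemma weight_le: "weight m c \<le> m"
proof -
  have "{j. j < m \<and> c j} \<subseteq> {..<m}" by auto
  then show ?thesis unfolding weight_def using card_mono[of "{..<m}"] by fastforce
qed

lemma weight_pos: "j < m \<Longrightarrow> c j \<Longrightarrow> 1 \<le> weight m c"
proof -
  assume "j < m" "c j"
  then have "{j. j < m \<and> c j} \<noteq> {}" by auto
  moreover have "finite {j. j < m \<and> c j}" by auto
  ultimately show ?thesis unfolding weight_def by (simp add: Suc_le_eq card_gt_0_iff)
qed

lemma card_cong_lt: "(\<And>j. j < M \<Longrightarrow> P j = Q j) \<Longrightarrow> card {j. j < M \<and> P j} = card {j. j < M \<and> Q j}"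
  by (rule arg_cong[where f=card]) auto

lemma goodR_D: "goodR m B e d R \<Longrightarrow> S \<subseteq> R \<Longrightarrow> \<exists>j<m. cw m B S j \<Longrightarrow> d \<le> e * weight m (cw m B S)"
  unfolding goodR_def by blast

lemma plotkin:
  assumes M: "M > 0" and R: "R \<subseteq> {..<2*M}"
  shows "goodR (2*M) (bkron T2 M M B) 1 d R \<longleftrightarrow>
         goodR M B 1 d {i\<in>R. i < M} \<and> goodR M B 2 d {i. i + M \<in> R}"
proof
  assume g: "goodR (2*M) (bkron T2 M M B) 1 d R"
  show "goodR M B 1 d {i\<in>R. i < M} \<and> goodR M B 2 d {i. i + M \<in> R}"
  proof
    show "goodR M B 1 d {i\<in>R. i < M}"
      unfolding goodR_def
    proof (intro allI impI)
      fix S0 assume S0: "S0 \<subseteq> {i\<in>R. i < M}" and nz: "\<exists>j<M. cw M B S0 j"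
      have SS: "S0 \<subseteq> {..<2*M}" using S0 R by auto
      have a: "{i\<in>S0. i < M} = S0" using S0 by auto
      have b: "{i. i + M \<in> S0} = {}" using S0 by auto
      have low: "cw (2*M) (bkron T2 M M B) S0 j = cw M B S0 j" if "j < M" for j
        using cw_low[OF M SS that] a b by (simp add: cw_empty cw_def)
      have high: "cw (2*M) (bkron T2 M M B) S0 (j + M) = False" if "j < M" for j
        using cw_high[OF M SS that] b by (simp add: cw_empty)
      have w: "weight (2*M) (cw (2*M) (bkron T2 M M B) S0) = weight M (cw M B S0)"
        unfolding weight_split unfolding weight_def
        using card_cong_lt[of M "\<lambda>j. cw (2*M) (bkron T2 M M B) S0 j" "cw M B S0", OF low]
          card_cong_lt[of M "\<lambda>j. cw (2*M) (bkron T2 M M B) S0 (j + M)" "\<lambda>j. False", OF high]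
        by simp
      obtain j where j: "j < M" "cw M B S0 j" using nz by auto
      have "\<exists>j<2*M. cw (2*M) (bkron T2 M M B) S0 j" using j low
        by (intro exI[of _ j]) auto
      moreover have "S0 \<subseteq> R" using S0 by auto
      ultimately have "d \<le> 1 * weight (2*M) (cw (2*M) (bkron T2 M M B) S0)"
        using goodR_D[OF g] by blast
      then show "d \<le> 1 * weight M (cw M B S0)" using w by simp
    qed
  next
    show "goodR M B 2 d {i. i + M \<in> R}"
      unfolding goodR_def
    proof (intro allI impI)
      fix S1 assume S1: "S1 \<subseteq> {i. i + M \<in> R}" and nz: "\<exists>j<M. cw M B S1 j"
      define S where "S = (\<lambda>i. i + M) ` S1"
      have SR: "S \<subseteq> R" using S1 by (auto simp: S_def)
      have SS: "S \<subseteq> {..<2*M}" using SR R by auto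
      have a: "{i\<in>S. i < M} = {}" by (auto simp: S_def)
      have b: "{i. i + M \<in> S} = S1" by (auto simp: S_def)
      have low: "cw (2*M) (bkron T2 M M B) S j = cw M B S1 j" if "j < M" for j
        using cw_low[OF M SS that] a b that by (simp add: cw_empty cw_def)
      have high: "cw (2*M) (bkron T2 M M B) S (j + M) = cw M B S1 j" if "j < M" for j
        using cw_high[OF M SS that] b by simp
      have w: "weight (2*M) (cw (2*M) (bkron T2 M M B) S) = 2 * weight M (cw M B S1)"
        unfolding weight_split unfolding weight_def
        using card_cong_lt[of M "\<lambda>j. cw (2*M) (bkron T2 M M B) S j" "cw M B S1", OF low]
          card_cong_lt[of M "\<lambda>j. cw (2*M) (bkron T2 M M B) S (j + M)" "cw M B S1", OF high]
        by simp
      obtain j where "j < M" "cw M B S1 j" using nz by auto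
      then have "\<exists>j<2*M. cw (2*M) (bkron T2 M M B) S j" using low
        by (intro exI[of _ j]) auto
      then have "d \<le> 1 * weight (2*M) (cw (2*M) (bkron T2 M M B) S)"
        using goodR_D[OF g SR] by blast
      then show "d \<le> 2 * weight M (cw M B S1)" using w by simp
    qed
  qed
next
  assume g: "goodR M B 1 d {i\<in>R. i < M} \<and> goodR M B 2 d {i. i + M \<in> R}"
  show "goodR (2*M) (bkron T2 M M B) 1 d R"
    unfolding goodR_def
  proof (intro allI impI)
    fix S assume SR: "S \<subseteq> R" and nz: "\<exists>j<2*M. cw (2*M) (bkron T2 M M B) S j"
    have SS: "S \<subseteq> {..<2*M}" using SR R by auto
    define u where "u = cw M B {i\<in>S. i < M}"
    define v where "v = cw M B {i. i + M \<in> S}"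
    have low: "cw (2*M) (bkron T2 M M B) S j = (u j \<noteq> v j)" if "j < M" for j
      using cw_low[OF M SS that] by (simp add: u_def v_def)
    have high: "cw (2*M) (bkron T2 M M B) S (j + M) = v j" if "j < M" for j
      using cw_high[OF M SS that] by (simp add: v_def)
    have w: "weight (2*M) (cw (2*M) (bkron T2 M M B) S) = card {j. j < M \<and> u j \<noteq> v j} + weight M v"
      unfolding weight_split unfolding weight_def
        using card_cong_lt[of M "\<lambda>j. cw (2*M) (bkron T2 M M B) S j" "\<lambda>j. u j \<noteq> v j", OF low]
          card_cong_lt[of M "\<lambda>j. cw (2*M) (bkron T2 M M B) S (j + M)" "v", OF high]
        by simp
    have gu: "d \<le> 1 * weight M u" if "\<exists>j<M. u j"
    proof -
      have "{i\<in>S. i < M} \<subseteq> {i\<in>R. i < M}" using SR by auto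
      then show ?thesis using goodR_D[of M B 1 d "{i\<in>R. i < M}" "{i\<in>S. i < M}"] g that unfolding u_def by blast
    qed
    have gv: "d \<le> 2 * weight M v" if "\<exists>j<M. v j"
    proof -
      have "{i. i + M \<in> S} \<subseteq> {i. i + M \<in> R}" using SR by auto
      then show ?thesis using goodR_D[of M B 2 d "{i. i + M \<in> R}" "{i. i + M \<in> S}"] g that unfolding v_def by blast
    qed
    have uv: "weight M u \<le> card {j. j < M \<and> u j \<noteq> v j} + weight M v"
    proof -
      have "{j. j < M \<and> u j} \<subseteq> {j. j < M \<and> u j \<noteq> v j} \<union> {j. j < M \<and> v j}" by auto
      then have "card {j. j < M \<and> u j} \<le> card ({j. j < M \<and> u j \<noteq> v j} \<union> {j. j < M \<and> v j})"
        by (intro card_mono) auto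
      also have "\<dots> \<le> card {j. j < M \<and> u j \<noteq> v j} + card {j. j < M \<and> v j}" by (rule card_Un_le)
      finally show ?thesis by (simp add: weight_def)
    qed
    show "d \<le> 1 * weight (2*M) (cw (2*M) (bkron T2 M M B) S)"
    proof (cases "\<exists>j<M. u j")
      case True then show ?thesis using gu uv w by simp
    next
      case False
      then have "{j. j < M \<and> u j \<noteq> v j} = {j. j < M \<and> v j}" by auto
      then have w2: "weight (2*M) (cw (2*M) (bkron T2 M M B) S) = 2 * weight M v"
        using w by (simp add: weight_def)
      have "\<exists>j<M. v j"
      proof (rule ccontr)
        assume nv: "\<not> (\<exists>j<M. v j)"
        obtain j where j: "j < 2*M" "cw (2*M) (bkron T2 M M B) S j" using nz by auto
        show False
        proof (cases "j < M")
          case True then show False using low False nv j by auto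
        next
          case jf: False
          obtain y where y: "j = y + M" "y < M" using jf j by (intro that[of "j - M"]) auto
          then show False using high[of y] nv j by simp
        qed
      qed
      then show ?thesis using gv w2 by simp
    qed
  qed
qed




definition G :: "nat \<Rightarrow> bmat \<Rightarrow> nat \<Rightarrow> nat \<Rightarrow> nat \<Rightarrow> bool" where
  "G m B e d k \<longleftrightarrow> (\<exists>R\<subseteq>{..<m}. card R = k \<and> goodR m B e d R)"

lemma goodR_mono: "R' \<subseteq> R \<Longrightarrow> goodR m B e d R \<Longrightarrow> goodR m B e d R'"
  unfolding goodR_def by blast

lemma goodR_empty: "goodR m B e d {}"
  unfolding goodR_def by (auto simp: cw_empty)

lemma G_0: "G m B e d 0"
  unfolding G_def by (intro exI[of _ "{}"]) (auto simp: goodR_empty)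

lemma G_le: "G m B e d k \<Longrightarrow> k \<le> m"
  unfolding G_def by (metis card_lessThan card_mono finite_lessThan)

lemma G_down: assumes "G m B e d k" "k' \<le> k" shows "G m B e d k'"
proof -
  obtain R where R: "R \<subseteq> {..<m}" "card R = k" "goodR m B e d R" using assms(1) unfolding G_def by blast
  obtain R' where R': "R' \<subseteq> R" "card R' = k'" using obtain_subset_with_card_n[of k' R] R assms(2) by auto
  show ?thesis unfolding G_def using R R' goodR_mono[OF R'(1) R(3)] by (intro exI[of _ R']) auto
qed

lemma count_down:
  fixes P :: "nat \<Rightarrow> bool"
  assumes P0: "P 0" and down: "\<And>a b. P a \<Longrightarrow> b \<le> a \<Longrightarrow> P b" and bnd: "\<And>a. P a \<Longrightarrow> a \<le> M"
  shows "P a \<longleftrightarrow> a \<le> card {i. i < M \<and> P (Suc i)}"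
proof
  assume Pa: "P a"
  have "{..<a} \<subseteq> {i. i < M \<and> P (Suc i)}"
  proof
    fix i assume "i \<in> {..<a}"
    then have "Suc i \<le> a" by auto
    then show "i \<in> {i. i < M \<and> P (Suc i)}" using down[OF Pa] bnd[OF Pa] by auto
  qed
  then have "card {..<a} \<le> card {i. i < M \<and> P (Suc i)}" by (intro card_mono) auto
  then show "a \<le> card {i. i < M \<and> P (Suc i)}" by simp
next
  assume a: "a \<le> card {i. i < M \<and> P (Suc i)}"
  show "P a"
  proof (rule ccontr)
    assume nP: "\<not> P a"
    then have a0: "a \<noteq> 0" using P0 by (cases a) auto
    have "{i. i < M \<and> P (Suc i)} \<subseteq> {..<a - 1}"
    proof
      fix i assume i: "i \<in> {i. i < M \<and> P (Suc i)}"
      have "Suc i < a"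
      proof (rule ccontr)
        assume "\<not> Suc i < a"
        then have "a \<le> Suc i" by simp
        then show False using down[of "Suc i" a] i nP by auto
      qed
      then show "i \<in> {..<a - 1}" by auto
    qed
    then have "card {i. i < M \<and> P (Suc i)} \<le> card {..<a - 1}" by (intro card_mono) auto
    then show False using a a0 by simp
  qed
qed

lemma split_count: "(\<exists>k0 k1. k = k0 + k1 \<and> k0 \<le> c1 \<and> k1 \<le> c2) \<longleftrightarrow> k \<le> (c1::nat) + c2"
proof
  assume "k \<le> c1 + c2"
  then show "\<exists>k0 k1. k = k0 + k1 \<and> k0 \<le> c1 \<and> k1 \<le> c2"
    by (intro exI[of _ "min k c1"] exI[of _ "k - min k c1"]) auto
qed auto

lemma G_double:
  assumes M: "M > 0"
  shows "G (2*M) (bkron T2 M M B) 1 d k \<longleftrightarrow> (\<exists>k0 k1. k = k0 + k1 \<and> G M B 1 d k0 \<and> G M B 2 d k1)"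
proof
  assume "G (2*M) (bkron T2 M M B) 1 d k"
  then obtain R where R: "R \<subseteq> {..<2*M}" "card R = k" "goodR (2*M) (bkron T2 M M B) 1 d R"
    unfolding G_def by blast
  define R0 where "R0 = {i\<in>R. i < M}"
  define R1 where "R1 = {i. i + M \<in> R}"
  have g: "goodR M B 1 d R0" "goodR M B 2 d R1" using plotkin[OF M R(1)] R(3) unfolding R0_def R1_def by auto
  have s: "R0 \<subseteq> {..<M}" "R1 \<subseteq> {..<M}" using R(1) by (auto simp: R0_def R1_def)
  have fin: "finite R0" "finite R1" using s finite_subset by auto
  have Req: "R = R0 \<union> (\<lambda>i. i + M) ` R1"
  proof (rule set_eqI)
    fix x show "x \<in> R \<longleftrightarrow> x \<in> R0 \<union> (\<lambda>i. i + M) ` R1"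
    proof (cases "x < M")
      case True then show ?thesis by (auto simp: R0_def R1_def)
    next
      case False
      then have "x = (x - M) + M" by simp
      then have "x \<in> R \<longleftrightarrow> x - M \<in> R1" by (auto simp: R1_def)
      moreover have "x \<in> (\<lambda>i. i + M) ` R1 \<longleftrightarrow> x - M \<in> R1"
        using False by (auto simp: image_iff intro: bexI[of _ "x - M"])
      ultimately show ?thesis using False by (auto simp: R0_def)
    qed
  qed
  have "card R = card R0 + card ((\<lambda>i. i + M) ` R1)"
    unfolding Req by (rule card_Un_disjoint) (use fin in \<open>auto simp: R0_def\<close>)
  also have "card ((\<lambda>i. i + M) ` R1) = card R1" by (rule card_image) (auto simp: inj_on_def)
  finally have "k = card R0 + card R1" using R(2) by simp
  moreover have "G M B 1 d (card R0)" "G M B 2 d (card R1)" unfolding G_def using s g by auto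
  ultimately show "\<exists>k0 k1. k = k0 + k1 \<and> G M B 1 d k0 \<and> G M B 2 d k1" by blast
next
  assume "\<exists>k0 k1. k = k0 + k1 \<and> G M B 1 d k0 \<and> G M B 2 d k1"
  then obtain k0 k1 R0 R1 where k: "k = k0 + k1" and R0: "R0 \<subseteq> {..<M}" "card R0 = k0" "goodR M B 1 d R0"
    and R1: "R1 \<subseteq> {..<M}" "card R1 = k1" "goodR M B 2 d R1"
    unfolding G_def by blast
  define R where "R = R0 \<union> (\<lambda>i. i + M) ` R1"
  have RR: "R \<subseteq> {..<2*M}" using R0 R1 by (auto simp: R_def)
  have e0: "{i\<in>R. i < M} = R0" using R0 by (auto simp: R_def)
  have e1: "{i. i + M \<in> R} = R1" using R0 by (auto simp: R_def)
  have fin: "finite R0" "finite R1" using R0 R1 finite_subset by auto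
  have "card R = card R0 + card ((\<lambda>i. i + M) ` R1)"
    unfolding R_def by (rule card_Un_disjoint) (use fin R0 in auto)
  also have "card ((\<lambda>i. i + M) ` R1) = card R1" by (rule card_image) (auto simp: inj_on_def)
  finally have "card R = k" using R0 R1 k by simp
  moreover have "goodR (2*M) (bkron T2 M M B) 1 d R" using plotkin[OF M RR] e0 e1 R0 R1 by simp
  ultimately show "G (2*M) (bkron T2 M M B) 1 d k" unfolding G_def using RR by blast
qed




definition rows_nz :: "nat \<Rightarrow> bmat \<Rightarrow> bool" where
  "rows_nz m B \<longleftrightarrow> (\<forall>i<m. \<exists>j<m. B i j)"

lemma cw_single: "cw m B {i} = (\<lambda>j. j < m \<and> B i j)"
proof -
  have "\<And>j. card {i'\<in>{i}. B i' j} = (if B i j then 1 else 0)"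
  proof -
    fix j show "card {i'\<in>{i}. B i' j} = (if B i j then 1 else 0)"
      by (cases "B i j") (auto simp: Collect_conv_if)
  qed
  then show ?thesis by (auto simp: cw_def)
qed

lemma min_dist_ge:
  assumes nz: "rows_nz m B" and R: "R \<subseteq> {..<m}" "R \<noteq> {}"
  shows "d \<le> e * min_dist m B R \<longleftrightarrow> goodR m B e d R"
proof -
  define W where "W = {weight m c | c. c \<in> code_of_rows m B R \<and> (\<exists>j<m. c j)}"
  have fin: "finite W"
  proof (rule finite_subset)
    show "W \<subseteq> {..m}" using weight_le by (auto simp: W_def)
  qed auto
  obtain i where i: "i \<in> R" using R by auto
  then obtain j where j: "j < m" "B i j" using nz R unfolding rows_nz_def by auto
  have ne: "W \<noteq> {}"
  proof -
    have "cw m B {i} \<in> code_of_rows m B R" unfolding code_of_rows_cw using i by auto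
    moreover have "\<exists>j<m. cw m B {i} j" using j by (auto simp: cw_single)
    ultimately show ?thesis unfolding W_def by auto
  qed
  have md: "min_dist m B R = Min W" unfolding min_dist_def W_def by simp
  have "d \<le> e * Min W \<longleftrightarrow> (\<forall>w\<in>W. d \<le> e * w)"
  proof
    assume a: "d \<le> e * Min W"
    show "\<forall>w\<in>W. d \<le> e * w"
    proof
      fix w assume "w \<in> W"
      then have "Min W \<le> w" using fin by simp
      then have "e * Min W \<le> e * w" by simp
      then show "d \<le> e * w" using a by linarith
    qed
  next
    assume "\<forall>w\<in>W. d \<le> e * w"
    then show "d \<le> e * Min W" using Min_in[OF fin ne] by blast
  qed
  also have "\<dots> \<longleftrightarrow> goodR m B e d R"
    unfolding W_def goodR_def code_of_rows_cw by blast
  finally show ?thesis unfolding md .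
qed

lemma G_spec:
  assumes nz: "rows_nz m B" and k: "1 \<le> k" "k \<le> m"
  shows "G m B e d k \<longleftrightarrow> d \<le> e * md_spec m B k"
proof -
  define X where "X = {min_dist m B R | R. R \<subseteq> {..<m} \<and> card R = k}"
  have fin: "finite X"
  proof (rule finite_subset)
    show "X \<subseteq> min_dist m B ` Pow {..<m}" by (auto simp: X_def)
  qed auto
  have ne: "X \<noteq> {}"
  proof -
    have "{..<k} \<subseteq> {..<m}" "card {..<k} = k" using k by auto
    then show ?thesis unfolding X_def by blast
  qed
  have "d \<le> e * Max X \<longleftrightarrow> (\<exists>x\<in>X. d \<le> e * x)"
  proof
    assume "d \<le> e * Max X" then show "\<exists>x\<in>X. d \<le> e * x" using Max_in[OF fin ne] by blast
  next
    assume "\<exists>x\<in>X. d \<le> e * x"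
    then obtain x where x: "x \<in> X" "d \<le> e * x" by blast
    then have "x \<le> Max X" using fin by simp
    then have "e * x \<le> e * Max X" by simp
    then show "d \<le> e * Max X" using x by linarith
  qed
  also have "\<dots> \<longleftrightarrow> G m B e d k"
  proof
    assume "\<exists>x\<in>X. d \<le> e * x"
    then obtain R where R: "R \<subseteq> {..<m}" "card R = k" "d \<le> e * min_dist m B R" unfolding X_def by blast
    have "R \<noteq> {}" using R k by auto
    then show "G m B e d k" using min_dist_ge[OF nz R(1)] R unfolding G_def by blast
  next
    assume "G m B e d k"
    then obtain R where R: "R \<subseteq> {..<m}" "card R = k" "goodR m B e d R" unfolding G_def by blast
    have "R \<noteq> {}" using R k by auto
    then show "\<exists>x\<in>X. d \<le> e * x" using min_dist_ge[OF nz R(1)] R unfolding X_def by blast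
  qed
  finally show ?thesis unfolding md_spec_def X_def by blast
qed

lemma G_count:
  assumes nz: "rows_nz m B" and k: "k \<le> m"
  shows "G m B e d k \<longleftrightarrow> k \<le> card {i. i < m \<and> d \<le> e * md_spec m B (Suc i)}"
proof -
  have "G m B e d k \<longleftrightarrow> k \<le> card {i. i < m \<and> G m B e d (Suc i)}"
    by (rule count_down) (auto intro: G_0 G_down G_le)
  also have "{i. i < m \<and> G m B e d (Suc i)} = {i. i < m \<and> d \<le> e * md_spec m B (Suc i)}"
    using G_spec[OF nz] by auto
  finally show ?thesis .
qed

lemma sorted_count:
  fixes xs :: "nat list"
  assumes s: "sorted xs" and i: "i < length xs"
  shows "d \<le> xs ! i \<longleftrightarrow> length xs - i \<le> card {j. j < length xs \<and> d \<le> xs ! j}"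
proof
  assume a: "d \<le> xs ! i"
  have "{i..<length xs} \<subseteq> {j. j < length xs \<and> d \<le> xs ! j}"
    using sorted_nth_mono[OF s] a by (auto intro: order.trans)
  then have "card {i..<length xs} \<le> card {j. j < length xs \<and> d \<le> xs ! j}" by (intro card_mono) auto
  then show "length xs - i \<le> card {j. j < length xs \<and> d \<le> xs ! j}" by simp
next
  assume a: "length xs - i \<le> card {j. j < length xs \<and> d \<le> xs ! j}"
  show "d \<le> xs ! i"
  proof (rule ccontr)
    assume "\<not> d \<le> xs ! i"
    then have lt: "xs ! i < d" by simp
    have "{j. j < length xs \<and> d \<le> xs ! j} \<subseteq> {Suc i..<length xs}"
    proof
      fix j assume j: "j \<in> {j. j < length xs \<and> d \<le> xs ! j}"
      have "\<not> j \<le> i"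
      proof
        assume "j \<le> i"
        then have "xs ! j \<le> xs ! i" using sorted_nth_mono[OF s _ i] by blast
        then show False using j lt by auto
      qed
      then show "j \<in> {Suc i..<length xs}" using j by auto
    qed
    then have "card {j. j < length xs \<and> d \<le> xs ! j} \<le> card {Suc i..<length xs}" by (intro card_mono) auto
    then show False using a i by simp
  qed
qed

lemma sort_desc_ge:
  fixes L :: "nat list"
  assumes k: "k < length L"
  shows "d \<le> sort_desc L ! k \<longleftrightarrow> k < length (filter (\<lambda>x. d \<le> x) L)"
proof -
  define xs where "xs = sort L"
  have len: "length xs = length L" by (simp add: xs_def)
  have "sort_desc L ! k = xs ! (length L - Suc k)"
    unfolding sort_desc_def xs_def using k by (simp add: rev_nth)
  moreover have "d \<le> xs ! (length L - Suc k) \<longleftrightarrow> length xs - (length L - Suc k) \<le> card {j. j < length xs \<and> d \<le> xs ! j}"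
    by (rule sorted_count) (use k len in \<open>auto simp: xs_def\<close>)
  moreover have "card {j. j < length xs \<and> d \<le> xs ! j} = length (filter (\<lambda>x. d \<le> x) L)"
  proof -
    have "card {j. j < length xs \<and> d \<le> xs ! j} = length (filter (\<lambda>x. d \<le> x) xs)"
      by (simp add: length_filter_conv_card)
    also have "\<dots> = length (filter (\<lambda>x. d \<le> x) L)"
      unfolding xs_def by (metis filter_sort length_sort)
    finally show ?thesis .
  qed
  ultimately show ?thesis using k len by auto
qed

lemma list_eq_by_ge:
  fixes xs ys :: "nat list"
  assumes "length xs = length ys" and "\<And>k d. k < length xs \<Longrightarrow> d \<le> xs ! k \<longleftrightarrow> d \<le> ys ! k"
  shows "xs = ys"
proof (rule nth_equalityI)
  show "length xs = length ys" by fact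
  fix k assume "k < length xs"
  then show "xs ! k = ys ! k" using assms(2)[of k "xs ! k"] assms(2)[of k "ys ! k"] by auto
qed




lemma md_spectrum_len: "length (md_spectrum m T) = m"
  by (simp add: md_spectrum_def)

lemma md_spectrum_nth: "k < m \<Longrightarrow> md_spectrum m T ! k = md_spec m T (Suc k)"
  unfolding md_spectrum_def by (subst nth_map) (auto simp del: upt_Suc)

lemma times_one_fun: "((*) (Suc 0) :: nat \<Rightarrow> nat) = (\<lambda>x. x)"
  by (rule ext) simp

lemma lkron21: "lkron [2, 1] X = map ((*) 2) X @ X"
  by (simp add: lkron_def times_one_fun)

lemma lkron21_len: "length (lkron [2, 1] X) = 2 * length X"
  by (simp add: lkron_def)

lemma filt_count:
  "length (filter (\<lambda>x. d \<le> x) (map ((*) e) (md_spectrum m B))) = card {i. i < m \<and> d \<le> e * md_spec m B (Suc i)}"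
proof -
  have "length (filter (\<lambda>x. d \<le> x) (map ((*) e) (md_spectrum m B)))
     = card {i. i < m \<and> d \<le> map ((*) e) (md_spectrum m B) ! i}"
    by (simp only: length_filter_conv_card length_map md_spectrum_len)
  also have "\<dots> = card {i. i < m \<and> d \<le> e * md_spec m B (Suc i)}"
    by (rule card_cong_lt) (simp add: md_spectrum_len md_spectrum_nth)
  finally show ?thesis .
qed

lemma filt_count1:
  "length (filter (\<lambda>x. d \<le> x) (md_spectrum m B)) = card {i. i < m \<and> d \<le> 1 * md_spec m B (Suc i)}"
  using filt_count[of d 1 m B] by (simp add: times_one_fun)

lemma count_le: "card {i. i < m \<and> P i} \<le> m"
proof -
  have "card {i. i < m \<and> P i} \<le> card {..<m}" by (intro card_mono) auto
  then show ?thesis by simp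
qed

lemma G_count': "rows_nz m B \<Longrightarrow> G m B e d k \<longleftrightarrow> k \<le> card {i. i < m \<and> d \<le> e * md_spec m B (Suc i)}"
  using G_count[of m B k e d] G_le[of m B e d k] count_le[of m "\<lambda>i. d \<le> e * md_spec m B (Suc i)"]
  by auto

lemma rows_nz_double:
  assumes M: "M > 0" and nz: "rows_nz M B"
  shows "rows_nz (2*M) (bkron T2 M M B)"
  unfolding rows_nz_def
proof (intro allI impI)
  fix i assume "i < 2*M"
  have "i mod M < M" using M by simp
  then obtain j where j: "j < M" "B (i mod M) j" using nz unfolding rows_nz_def by blast
  then have "bkron T2 M M B i j" by (simp add: bkron_def T2_def)
  then show "\<exists>j<2*M. bkron T2 M M B i j" using j by (intro exI[of _ j]) auto
qed

theorem double:
  assumes M: "M > 0" and nz: "rows_nz M B"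
  shows "md_spectrum (2*M) (bkron T2 M M B) = sort_desc (lkron [2, 1] (md_spectrum M B))"
proof (rule list_eq_by_ge)
  show "length (md_spectrum (2*M) (bkron T2 M M B)) = length (sort_desc (lkron [2, 1] (md_spectrum M B)))"
    by (simp add: sort_desc_def lkron_def md_spectrum_len)
  fix k d assume k: "k < length (md_spectrum (2*M) (bkron T2 M M B))"
  then have k2: "k < 2*M" by (simp add: md_spectrum_len)
  define c1 where "c1 = card {i. i < M \<and> d \<le> 1 * md_spec M B (Suc i)}"
  define c2 where "c2 = card {i. i < M \<and> d \<le> 2 * md_spec M B (Suc i)}"
  have nzC: "rows_nz (2*M) (bkron T2 M M B)" by (rule rows_nz_double[OF M nz])
  have "d \<le> md_spectrum (2*M) (bkron T2 M M B) ! k \<longleftrightarrow> G (2*M) (bkron T2 M M B) 1 d (Suc k)"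
    using G_spec[OF nzC, of "Suc k" 1 d] k2 by (simp add: md_spectrum_nth)
  also have "\<dots> \<longleftrightarrow> (\<exists>k0 k1. Suc k = k0 + k1 \<and> G M B 1 d k0 \<and> G M B 2 d k1)"
    by (rule G_double[OF M])
  also have "\<dots> \<longleftrightarrow> (\<exists>k0 k1. Suc k = k0 + k1 \<and> k0 \<le> c1 \<and> k1 \<le> c2)"
    using G_count'[OF nz] unfolding c1_def c2_def by simp
  also have "\<dots> \<longleftrightarrow> Suc k \<le> c1 + c2" by (rule split_count)
  also have "\<dots> \<longleftrightarrow> k < length (filter (\<lambda>x. d \<le> x) (lkron [2, 1] (md_spectrum M B)))"
    unfolding lkron21 using filt_count[of d 2 M B] filt_count1[of d M B] unfolding c1_def c2_def by (simp add: Suc_le_eq; linarith)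
  also have "\<dots> \<longleftrightarrow> d \<le> sort_desc (lkron [2, 1] (md_spectrum M B)) ! k"
    by (rule sort_desc_ge[symmetric]) (use k2 in \<open>simp add: lkron_def md_spectrum_len\<close>)
  finally show "d \<le> md_spectrum (2*M) (bkron T2 M M B) ! k \<longleftrightarrow> d \<le> sort_desc (lkron [2, 1] (md_spectrum M B)) ! k" .
qed

lemma sorted_spec:
  assumes nz: "rows_nz m B"
  shows "sort_desc (md_spectrum m B) = md_spectrum m B"
proof (rule list_eq_by_ge)
  show "length (sort_desc (md_spectrum m B)) = length (md_spectrum m B)" by (simp add: sort_desc_def)
  fix k d assume k: "k < length (sort_desc (md_spectrum m B))"
  then have km: "k < m" by (simp add: sort_desc_def md_spectrum_len)
  have "d \<le> sort_desc (md_spectrum m B) ! k \<longleftrightarrow> k < length (filter (\<lambda>x. d \<le> x) (md_spectrum m B))"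
    by (rule sort_desc_ge) (simp add: km md_spectrum_len)
  also have "\<dots> \<longleftrightarrow> k < card {i. i < m \<and> d \<le> 1 * md_spec m B (Suc i)}"
    using filt_count1[of d m B] by simp
  also have "\<dots> \<longleftrightarrow> G m B 1 d (Suc k)" using G_count'[OF nz] by (simp add: Suc_le_eq)
  also have "\<dots> \<longleftrightarrow> d \<le> md_spectrum m B ! k"
    using G_spec[OF nz, of "Suc k" 1 d] km by (simp add: md_spectrum_nth)
  finally show "d \<le> sort_desc (md_spectrum m B) ! k \<longleftrightarrow> d \<le> md_spectrum m B ! k" .
qed




lemma md_spec_cong:
  assumes eq: "\<And>i j. i < m \<Longrightarrow> j < m \<Longrightarrow> A i j = A' i j"
  shows "md_spec m A k = md_spec m A' k"
proof -
  have cw: "cw m A S = cw m A' S" if S: "S \<subseteq> {..<m}" for S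
    unfolding cw_def
  proof (rule ext)
    fix j
    show "(j < m \<and> odd (card {i\<in>S. A i j})) = (j < m \<and> odd (card {i\<in>S. A' i j}))"
    proof (cases "j < m")
      case True
      have "{i\<in>S. A i j} = {i\<in>S. A' i j}"
      proof (rule Collect_cong)
        fix i show "(i \<in> S \<and> A i j) = (i \<in> S \<and> A' i j)"
        proof (cases "i \<in> S")
          case True
          then have "i < m" using S by blast
          then show ?thesis using eq[of i j] \<open>j < m\<close> by simp
        qed simp
      qed
      then show ?thesis by (simp only:)
    next
      case False then show ?thesis by simp
    qed
  qed
  have code: "code_of_rows m A R = code_of_rows m A' R" if R: "R \<subseteq> {..<m}" for R
    unfolding code_of_rows_cw
  proof (rule Collect_cong, rule iffI)
    fix x assume "\<exists>S. x = cw m A S \<and> S \<subseteq> R"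
    then obtain S where S: "x = cw m A S" "S \<subseteq> R" by blast
    have "cw m A S = cw m A' S" using S(2) R by (intro cw) (rule subset_trans)
    then show "\<exists>S. x = cw m A' S \<and> S \<subseteq> R" using S by (intro exI[of _ S]) simp
  next
    fix x assume "\<exists>S. x = cw m A' S \<and> S \<subseteq> R"
    then obtain S where S: "x = cw m A' S" "S \<subseteq> R" by blast
    have "cw m A S = cw m A' S" using S(2) R by (intro cw) (rule subset_trans)
    then show "\<exists>S. x = cw m A S \<and> S \<subseteq> R" using S by (intro exI[of _ S]) simp
  qed
  have md: "min_dist m A R = min_dist m A' R" if "R \<subseteq> {..<m}" for R
    unfolding min_dist_def by (simp only: code[OF that])
  have X: "{min_dist m A R | R. R \<subseteq> {..<m} \<and> card R = k} = {min_dist m A' R | R. R \<subseteq> {..<m} \<and> card R = k}"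
  proof (rule Collect_cong, rule iffI)
    fix x assume "\<exists>R. x = min_dist m A R \<and> R \<subseteq> {..<m} \<and> card R = k"
    then obtain R where R: "x = min_dist m A R" "R \<subseteq> {..<m}" "card R = k" by blast
    then show "\<exists>R. x = min_dist m A' R \<and> R \<subseteq> {..<m} \<and> card R = k"
      using md[OF R(2)] by (intro exI[of _ R]) simp
  next
    fix x assume "\<exists>R. x = min_dist m A' R \<and> R \<subseteq> {..<m} \<and> card R = k"
    then obtain R where R: "x = min_dist m A' R" "R \<subseteq> {..<m}" "card R = k" by blast
    then show "\<exists>R. x = min_dist m A R \<and> R \<subseteq> {..<m} \<and> card R = k"
      using md[OF R(2)] by (intro exI[of _ R]) simp
  qed
  show ?thesis unfolding md_spec_def by (simp only: X)
qed

lemma md_spectrum_cong: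
  assumes "\<And>i j. i < m \<Longrightarrow> j < m \<Longrightarrow> A i j = A' i j"
  shows "md_spectrum m A = md_spectrum m A'"
  unfolding md_spectrum_def using md_spec_cong[OF assms] by simp

lemma mod_mult_div_aux:
  fixes i m q :: nat
  assumes "m > 0"
  shows "i mod (q * m) div m = i div m mod q" "i mod (q * m) mod m = i mod m" "i div (q * m) = i div m div q"
proof -
  have e: "i mod (m * q) = m * (i div m mod q) + i mod m" by (rule mod_mult2_eq)
  show "i mod (q * m) div m = i div m mod q" using e assms by (simp add: mult.commute)
  show "i mod (q * m) mod m = i mod m" using e by (simp add: mult.commute)
  show "i div (q * m) = i div m div q" by (simp add: div_mult2_eq mult.commute)
qed

lemma bkpow_step:
  assumes m: "m > 0"
  shows "bkron (bkpow2 T2 (Suc n)) m m A = bkron T2 (2^n * m) (2^n * m) (bkron (bkpow2 T2 n) m m A)"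
  by (rule ext, rule ext) (simp add: bkron_def mod_mult_div_aux[OF m])

lemma rows_nz_cong: "(\<And>i j. i < m \<Longrightarrow> j < m \<Longrightarrow> A i j = A' i j) \<Longrightarrow> rows_nz m A \<Longrightarrow> rows_nz m A'"
  unfolding rows_nz_def by fastforce

lemma lkron_Cons: "lkron (x # u) v = map ((*) x) v @ lkron u v"
  by (simp add: lkron_def)

lemma lkron_Nil: "lkron [] v = []"
  by (simp add: lkron_def)

lemma lkron_append: "lkron (a @ b) w = lkron a w @ lkron b w"
  by (simp add: lkron_def)

lemma lkron_map: "lkron (map ((*) x) v) w = map ((*) x) (lkron v w)"
  by (induct v) (simp_all add: lkron_Cons lkron_Nil comp_def mult.assoc)

lemma lkron_assoc: "lkron (lkron u v) w = lkron u (lkron v w)"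
  by (induct u) (simp_all add: lkron_Cons lkron_Nil lkron_append lkron_map)

lemma lkron_one: "lkron u [1] = u"
  by (induct u) (simp_all add: lkron_Cons lkron_Nil)

lemma lkron_one_left: "lkron [1] u = u"
  by (simp add: lkron_Cons lkron_Nil times_one_fun)

lemma lkron_one_left': "lkron [Suc 0] u = u"
  by (simp add: lkron_Cons lkron_Nil times_one_fun)

lemma lkron_one': "lkron u [Suc 0] = u"
  by (induct u) (simp_all add: lkron_Cons lkron_Nil)

lemma mset_lkron: "mset (lkron u v) = sum_mset (image_mset (\<lambda>x. mset (map ((*) x) v)) (mset u))"
  by (induct u) (simp_all add: lkron_Cons lkron_Nil)

lemma sort_desc_mset: "mset xs = mset ys \<Longrightarrow> sort_desc xs = sort_desc ys"
  unfolding sort_desc_def using properties_for_sort[of "sort ys" xs] by simp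

lemma mset_sort_desc: "mset (sort_desc xs) = mset xs"
  by (simp add: sort_desc_def)

lemma main:
  assumes m: "m > 0" and nz: "rows_nz m A"
  shows "md_spectrum (2^n * m) (bkron (bkpow2 T2 n) m m A) = sort_desc (lkron (lkpow [2, 1] n) (md_spectrum m A))
         \<and> rows_nz (2^n * m) (bkron (bkpow2 T2 n) m m A)"
proof (induct n)
  case 0
  have eq: "\<And>i j. i < m \<Longrightarrow> j < m \<Longrightarrow> A i j = bkron (bkpow2 T2 0) m m A i j"
    by (simp add: bkron_def)
  have "md_spectrum (2^0 * m) (bkron (bkpow2 T2 0) m m A) = md_spectrum m A"
    using md_spectrum_cong[OF eq] by simp
  also have "\<dots> = sort_desc (md_spectrum m A)" using sorted_spec[OF nz] by simp
  also have "\<dots> = sort_desc (lkron (lkpow [2, 1] 0) (md_spectrum m A))" by (simp add: lkron_one_left lkron_one_left')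
  finally show ?case using rows_nz_cong[OF eq nz] by simp
next
  case (Suc n)
  let ?B = "bkron (bkpow2 T2 n) m m A"
  let ?S = "md_spectrum m A"
  have IH1: "md_spectrum (2^n * m) ?B = sort_desc (lkron (lkpow [2, 1] n) ?S)" using Suc by blast
  have IH2: "rows_nz (2^n * m) ?B" using Suc by blast
  have M: "2^n * m > 0" using m by simp
  have e: "bkron (bkpow2 T2 (Suc n)) m m A = bkron T2 (2^n * m) (2^n * m) ?B" by (rule bkpow_step[OF m])
  have e2: "2 ^ Suc n * m = 2 * (2^n * m)" by simp
  have D: "md_spectrum (2 * (2^n * m)) (bkron T2 (2^n * m) (2^n * m) ?B) = sort_desc (lkron [2, 1] (md_spectrum (2^n * m) ?B))"
    by (rule double[OF M IH2])
  have RR: "rows_nz (2 * (2^n * m)) (bkron T2 (2^n * m) (2^n * m) ?B)"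
    by (rule rows_nz_double[OF M IH2])
  have L: "lkron (lkpow [2, 1] (Suc n)) ?S = lkron [2, 1] (lkron (lkpow [2, 1] n) ?S)"
    by (simp only: lkpow.simps lkron_assoc)
  have X: "sort_desc (lkron [2, 1] (sort_desc (lkron (lkpow [2, 1] n) ?S))) = sort_desc (lkron [2, 1] (lkron (lkpow [2, 1] n) ?S))"
    by (rule sort_desc_mset) (simp only: lkron21 mset_sort_desc mset_append mset_map)
  have "md_spectrum (2 ^ Suc n * m) (bkron (bkpow2 T2 (Suc n)) m m A) = sort_desc (lkron (lkpow [2, 1] (Suc n)) ?S)"
    unfolding e e2 D IH1 X L ..
  moreover have "rows_nz (2 ^ Suc n * m) (bkron (bkpow2 T2 (Suc n)) m m A)"
    unfolding e e2 by (rule RR)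
  ultimately show ?case by (rule conjI)
qed

lemma kernel_rows_nz:
  assumes "binary_kernel p Tp"
  shows "rows_nz p Tp"
proof -
  obtain B where B: "\<forall>i<p. \<forall>j<p. bmult p Tp B i j = (i = j) \<and> bmult p B Tp i j = (i = j)"
    using assms unfolding binary_kernel_def binvertible_def by blast
  show ?thesis unfolding rows_nz_def
  proof (intro allI impI)
    fix i assume i: "i < p"
    have "bmult p Tp B i i" using B i by blast
    then have o: "odd (card {l. l < p \<and> Tp i l \<and> B l i})" unfolding bmult_def .
    have "{l. l < p \<and> Tp i l \<and> B l i} \<noteq> {}"
    proof
      assume "{l. l < p \<and> Tp i l \<and> B l i} = {}"
      then have c0: "card {l. l < p \<and> Tp i l \<and> B l i} = 0" by (simp only: card.empty)
      from o have "odd (0::nat)" unfolding c0 .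
      then show False by simp
    qed
    then show "\<exists>j<p. Tp i j" by blast
  qed
qed

lemma spec_one: "md_spectrum 1 (\<lambda>i j. True) = [1]"
proof -
  have nz: "rows_nz 1 (\<lambda>i j. True)" unfolding rows_nz_def by auto
  have g1: "G 1 (\<lambda>i j. True) 1 1 1"
    unfolding G_def goodR_def
  proof (intro exI[of _ "{0}"] conjI allI impI)
    fix S assume "\<exists>j<1. cw 1 (\<lambda>i j. True) S j"
    then obtain j where "j < 1" "cw 1 (\<lambda>i j. True) S j" by blast
    then show "1 \<le> 1 * weight 1 (cw 1 (\<lambda>i j. True) S)" using weight_pos[of j 1] by simp
  qed auto
  have g2: "\<not> G 1 (\<lambda>i j. True) 1 2 1"
  proof
    assume "G 1 (\<lambda>i j. True) 1 2 1"
    then obtain R where R: "R \<subseteq> {..<1}" "card R = 1" "goodR 1 (\<lambda>i j. True) 1 2 R" unfolding G_def by blast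
    have "R \<subseteq> {0}" using R(1) by auto
    moreover have "R \<noteq> {}" using R(2) by auto
    ultimately have "R = {0}" by blast
    then have "2 \<le> 1 * weight 1 (cw 1 (\<lambda>i j. True) {0})" using R(3) unfolding goodR_def
      by (auto simp: cw_single)
    then show False using weight_le[of 1 "cw 1 (\<lambda>i j. True) {0}"] by simp
  qed
  have "md_spec 1 (\<lambda>i j. True) 1 = 1"
    using G_spec[OF nz, of 1 1 1] G_spec[OF nz, of 1 1 2] g1 g2 by simp
  then show ?thesis by (simp add: md_spectrum_def)
qed

theorem proposition1:
  fixes n p :: nat and Tp :: bmat
  assumes "p \<ge> 1"
    and "binary_kernel p Tp"
  shows "md_spectrum (2^n * p) (bkron (bkpow2 T2 n) p p Tp)
           = sort_desc (lkron (md_spectrum (2^n) (bkpow2 T2 n)) (md_spectrum p Tp))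
       \<and> md_spectrum (2^n * p) (bkron (bkpow2 T2 n) p p Tp)
           = sort_desc (lkron (lkpow [2, 1] n) (md_spectrum p Tp))"
proof -
  have p: "p > 0" using assms(1) by simp
  have A: "md_spectrum (2^n * p) (bkron (bkpow2 T2 n) p p Tp) = sort_desc (lkron (lkpow [2, 1] n) (md_spectrum p Tp))"
    using main[OF p kernel_rows_nz[OF assms(2)]] by blast
  have nz1: "rows_nz 1 (\<lambda>i j. True)" unfolding rows_nz_def by auto
  have k1: "bkron (bkpow2 T2 n) 1 1 (\<lambda>i j. True) = bkpow2 T2 n"
    by (rule ext, rule ext) (simp add: bkron_def)
  have "md_spectrum (2^n) (bkpow2 T2 n) = sort_desc (lkron (lkpow [2, 1] n) [1])"
    using main[of 1 "\<lambda>i j. True" n] nz1 unfolding k1 spec_one by simp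
  then have T: "md_spectrum (2^n) (bkpow2 T2 n) = sort_desc (lkpow [2, 1] n)" by (simp add: lkron_one lkron_one')
  have "sort_desc (lkron (md_spectrum (2^n) (bkpow2 T2 n)) (md_spectrum p Tp))
      = sort_desc (lkron (lkpow [2, 1] n) (md_spectrum p Tp))"
    unfolding T by (rule sort_desc_mset) (simp add: mset_lkron mset_sort_desc)
  then show ?thesis using A by simp
qed



end
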